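(* Let $G$ and $H$ be finite graphs such that $H$ fractionally tiles $G$. Let $f(K)$ denote any one of the following for a graph $K$: (a) the number of independent sets in $K$; (b) the number of proper colorings of $K$ with a fixed number $q$ of colors; (c) the total weight of the homomorphisms from $K$ to a fixed finite graph $F$, where the vertices of $F$ carry arbitrary fixed positive weights. Then $$f(G)^{1/|G|}\le f(H)^{1/|H|}.$$
   Context: A set of vertices is independent if no two of its vertices are adjacent (the empty set counts). A homomorphism from $K$ to $F$ is a map $V(K)\to V(F)$ sending adjacent vertices to adjacent vertices. Given $w:V(F)\to(0,\infty)$, the weight of a map $\phi:V(K)\to V(F)$ is $\prod_{x\in V(K)}w(\phi(x))$, and the total weight of a set of maps is the sum of their weights. A copy of $H$ in $G$ is a subgraph isomorphic to $H$; $H$ fractionally tiles $G$ means there is a finite list of copies of $H$ in $G$ such that every vertex of $G$ is covered the same number of times. $|K|$ is the number of vertices. *)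

theory Defs
  imports Complex_Main "HOL-Library.FuncSet"
begin

definition graph :: "'a set \<Rightarrow> ('a \<times> 'a) set \<Rightarrow> bool" where
  "graph V E \<longleftrightarrow> finite V \<and> E \<subseteq> V \<times> V \<and> sym E \<and> (\<forall>x. (x, x) \<notin> E)"

definition graph_iso :: "'a set \<Rightarrow> ('a \<times> 'a) set \<Rightarrow> 'b set \<Rightarrow> ('b \<times> 'b) set \<Rightarrow> bool" where
  "graph_iso V E V' E' \<longleftrightarrow>
     (\<exists>f. bij_betw f V V' \<and> (\<forall>x\<in>V. \<forall>y\<in>V. (x, y) \<in> E \<longleftrightarrow> (f x, f y) \<in> E'))"

definition is_copy :: "'b set \<Rightarrow> ('b \<times> 'b) set \<Rightarrow> 'a set \<Rightarrow> ('a \<times> 'a) set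
                       \<Rightarrow> 'a set \<times> ('a \<times> 'a) set \<Rightarrow> bool" where
  "is_copy VH EH VG EG C \<longleftrightarrow>
     fst C \<subseteq> VG \<and> snd C \<subseteq> EG \<and> snd C \<subseteq> fst C \<times> fst C \<and> graph_iso (fst C) (snd C) VH EH"

definition fractionally_tiles :: "'b set \<Rightarrow> ('b \<times> 'b) set \<Rightarrow> 'a set \<Rightarrow> ('a \<times> 'a) set \<Rightarrow> bool" where
  "fractionally_tiles VH EH VG EG \<longleftrightarrow>
     (\<exists>cs c. (\<forall>C\<in>set cs. is_copy VH EH VG EG C) \<and> c > (0::nat) \<and>
             (\<forall>v\<in>VG. length (filter (\<lambda>C. v \<in> fst C) cs) = c))"

definition indep_sets :: "'a set \<Rightarrow> ('a \<times> 'a) set \<Rightarrow> 'a set set" where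
  "indep_sets V E = {S. S \<subseteq> V \<and> (\<forall>x\<in>S. \<forall>y\<in>S. (x, y) \<notin> E)}"

definition proper_colorings :: "nat \<Rightarrow> 'a set \<Rightarrow> ('a \<times> 'a) set \<Rightarrow> ('a \<Rightarrow> nat) set" where
  "proper_colorings q V E = {\<phi> \<in> V \<rightarrow>\<^sub>E {..<q}. \<forall>(x, y)\<in>E. \<phi> x \<noteq> \<phi> y}"

definition homs :: "'a set \<Rightarrow> ('a \<times> 'a) set \<Rightarrow> 'c set \<Rightarrow> ('c \<times> 'c) set \<Rightarrow> ('a \<Rightarrow> 'c) set" where
  "homs V E VF EF = {\<phi> \<in> V \<rightarrow>\<^sub>E VF. \<forall>(x, y)\<in>E. (\<phi> x, \<phi> y) \<in> EF}"

definition hom_weight :: "('c \<Rightarrow> real) \<Rightarrow> 'a set \<Rightarrow> ('a \<times> 'a) set \<Rightarrow> 'c set \<Rightarrow> ('c \<times> 'c) set \<Rightarrow> real" where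
  "hom_weight w V E VF EF = (\<Sum>\<phi>\<in>homs V E VF EF. \<Prod>x\<in>V. w (\<phi> x))"

end

theory Submission
  imports Defs "HOL-Analysis.Convex"
begin

lemma pow_powr_inv:
  fixes p :: real assumes "p \<ge> 0" "c > 0"
  shows "(p ^ c) powr (1 / real c) = p"
proof (cases "p = 0")
  case True then show ?thesis using assms by simp
next
  case False
  then have "p > 0" using assms by simp
  then have "p ^ c = p powr real c" by (simp add: powr_realpow)
  then show ?thesis using \<open>p > 0\<close> assms by (simp add: powr_powr)
qed

lemma amgm_c:
  fixes x :: "'i \<Rightarrow> real"
  assumes "finite J" "card J = c" "c > 0" "\<And>i. i \<in> J \<Longrightarrow> 0 \<le> x i"
  shows "(\<Prod>i\<in>J. x i) \<le> (\<Sum>i\<in>J. x i ^ c / c)"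
proof -
  have J: "J \<noteq> {}" using assms by auto
  have "(\<Prod>i\<in>J. x i ^ c) powr (1 / card J) \<le> (\<Sum>i\<in>J. x i ^ c / card J)"
    using arith_geom_mean[OF assms(1) J, of "\<lambda>i. x i ^ c"] assms(4) by simp
  moreover have "(\<Prod>i\<in>J. x i ^ c) = (\<Prod>i\<in>J. x i) ^ c" by (simp add: prod_power_distrib)
  moreover have "((\<Prod>i\<in>J. x i) ^ c) powr (1 / real c) = (\<Prod>i\<in>J. x i)"
    by (rule pow_powr_inv) (use assms in \<open>auto intro: prod_nonneg\<close>)
  ultimately show ?thesis using assms(2) by simp
qed

lemma holder_gen:
  fixes w :: "'c \<Rightarrow> real" and h :: "'i \<Rightarrow> 'c \<Rightarrow> real"
  assumes A: "finite A" and J: "finite J" "card J = c" and c: "c > 0"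
    and w: "\<And>a. a \<in> A \<Longrightarrow> 0 \<le> w a" and h: "\<And>i a. 0 \<le> h i a"
  shows "(\<Sum>a\<in>A. w a * (\<Prod>i\<in>J. h i a)) \<le> (\<Prod>i\<in>J. root c (\<Sum>a\<in>A. w a * h i a ^ c))"
proof -
  define S where "S i = (\<Sum>a\<in>A. w a * h i a ^ c)" for i
  have S0: "S i \<ge> 0" for i unfolding S_def using w h by (auto intro!: sum_nonneg)
  have R0: "0 \<le> (\<Prod>i\<in>J. root c (S i))"
    by (rule prod_nonneg) (use S0 in \<open>auto simp: real_root_ge_zero\<close>)
  show ?thesis
  proof (cases "\<exists>i\<in>J. S i = 0")
    case True
    then obtain i where i: "i \<in> J" "S i = 0" by auto
    have z: "w a * h i a ^ c = 0" if "a \<in> A" for a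
    proof -
      have "\<forall>a\<in>A. 0 \<le> w a * h i a ^ c" using w h by (auto intro!: mult_nonneg_nonneg)
      then have "\<forall>a\<in>A. w a * h i a ^ c = 0"
        using sum_nonneg_eq_0_iff[OF A, of "\<lambda>a. w a * h i a ^ c"] i(2) unfolding S_def by simp
      then show ?thesis using that by blast
    qed
    have "w a * (\<Prod>i\<in>J. h i a) = 0" if "a \<in> A" for a
    proof (cases "w a = 0")
      case False
      then have "h i a = 0" using z[OF that] by simp
      then have "(\<Prod>i\<in>J. h i a) = 0" using i(1) J(1) by (meson prod_zero_iff)
      then show ?thesis by simp
    qed simp
    then have "\<forall>a\<in>A. w a * (\<Prod>i\<in>J. h i a) = 0" by blast
    then have "(\<Sum>a\<in>A. w a * (\<Prod>i\<in>J. h i a)) = 0" by (rule sum.neutral)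
    then show ?thesis using R0 unfolding S_def by simp
  next
    case False
    then have Sp: "\<And>i. i \<in> J \<Longrightarrow> S i > 0" using S0 by (metis less_eq_real_def)
    define r where "r i = root c (S i)" for i
    have rp: "i \<in> J \<Longrightarrow> r i > 0" for i using Sp c by (simp add: r_def)
    have rc: "i \<in> J \<Longrightarrow> r i ^ c = S i" for i using S0 c by (simp add: r_def real_root_pow_pos2)
    define P where "P = (\<Prod>i\<in>J. r i)"
    have Pp: "P > 0" unfolding P_def using rp by (simp add: prod_pos)
    have key: "w a * (\<Prod>i\<in>J. h i a) \<le> P * (\<Sum>i\<in>J. w a * h i a ^ c / (S i * c))" if a: "a \<in> A" for a
    proof -
      have "(\<Prod>i\<in>J. h i a / r i) \<le> (\<Sum>i\<in>J. (h i a / r i) ^ c / c)"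
        by (rule amgm_c) (use J c h rp in \<open>auto intro: divide_nonneg_pos\<close>)
      also have "\<dots> = (\<Sum>i\<in>J. h i a ^ c / (S i * c))"
        by (rule sum.cong) (auto simp: power_divide rc)
      finally have "(\<Prod>i\<in>J. h i a) / P \<le> (\<Sum>i\<in>J. h i a ^ c / (S i * c))"
        unfolding P_def by (simp add: prod_dividef)
      then have "(\<Prod>i\<in>J. h i a) \<le> P * (\<Sum>i\<in>J. h i a ^ c / (S i * c))"
        using Pp by (simp add: divide_le_eq mult.commute)
      then have "w a * (\<Prod>i\<in>J. h i a) \<le> w a * (P * (\<Sum>i\<in>J. h i a ^ c / (S i * c)))"
        using w a by (simp add: mult_left_mono)
      then show ?thesis by (simp add: sum_distrib_left algebra_simps)
    qed
    have "(\<Sum>a\<in>A. w a * (\<Prod>i\<in>J. h i a)) \<le> (\<Sum>a\<in>A. P * (\<Sum>i\<in>J. w a * h i a ^ c / (S i * c)))"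
      by (rule sum_mono) (use key in auto)
    also have "\<dots> = P * (\<Sum>i\<in>J. (\<Sum>a\<in>A. w a * h i a ^ c) / (S i * c))"
      unfolding sum_distrib_left[symmetric] sum_divide_distrib
      by (rule arg_cong[where f="\<lambda>x. P * x"], rule sum.swap)
    also have "\<dots> = P * (\<Sum>i\<in>J. 1 / c)"
      using Sp c by (intro arg_cong[where f="\<lambda>x. P * x"] sum.cong) (auto simp: S_def[symmetric] dest: Sp)
    also have "\<dots> = P" using J c by simp
    finally show ?thesis unfolding P_def r_def S_def .
  qed
qed

lemma sum_PiE_insert:
  assumes "v \<notin> S"
  shows "(\<Sum>x\<in>insert v S \<rightarrow>\<^sub>E A. F x) = (\<Sum>a\<in>A. \<Sum>y\<in>S \<rightarrow>\<^sub>E A. F (y(v:=a)))"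
proof -
  have "(\<Sum>x\<in>insert v S \<rightarrow>\<^sub>E A. F x) = (\<Sum>(a,y)\<in>A \<times> (S \<rightarrow>\<^sub>E A). F (y(v:=a)))"
    using assms
    by (intro sum.reindex_bij_witness[of _ "\<lambda>(a,y). y(v := a)" "\<lambda>x. (x v, x(v := undefined))"])
       (auto simp: PiE_def extensional_def)
  then show ?thesis by (simp add: sum.cartesian_product)
qed

definition wt :: "('c \<Rightarrow> real) \<Rightarrow> 'a set \<Rightarrow> ('a \<Rightarrow> 'c) \<Rightarrow> real" where
  "wt w S x = (\<Prod>v\<in>S. w (x v))"

lemma wt_insert:
  assumes "finite S" "v \<notin> S"
  shows "wt w (insert v S) (y(v:=a)) = w a * wt w S y"
proof -
  have "(\<Prod>u\<in>S. w ((y(v:=a)) u)) = (\<Prod>u\<in>S. w (y u))"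
    using assms by (intro prod.cong) auto
  then show ?thesis using assms by (simp add: wt_def)
qed

lemma wt_nonneg: "(\<And>a. a \<in> A \<Longrightarrow> 0 \<le> w a) \<Longrightarrow> x \<in> S \<rightarrow>\<^sub>E A \<Longrightarrow> 0 \<le> wt w S x"
  unfolding wt_def by (rule prod_nonneg) (auto simp: PiE_iff)

lemma finner:
  fixes C :: "'i \<Rightarrow> 'a set" and f :: "'i \<Rightarrow> ('a \<Rightarrow> 'c) \<Rightarrow> real"
  assumes "finite V" "finite A" "finite I" "\<And>a. a \<in> A \<Longrightarrow> 0 \<le> w a"
    "\<And>i. i \<in> I \<Longrightarrow> C i \<subseteq> V"
    "\<And>v. v \<in> V \<Longrightarrow> card {i\<in>I. v \<in> C i} = c" "c > 0" "\<And>i y. 0 \<le> f i y"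
  shows "(\<Sum>x\<in>V \<rightarrow>\<^sub>E A. wt w V x * (\<Prod>i\<in>I. f i (restrict x (C i)))) ^ c
         \<le> (\<Prod>i\<in>I. \<Sum>y\<in>C i \<rightarrow>\<^sub>E A. wt w (C i) y * f i y ^ c)"
  using assms
proof (induction V arbitrary: C f rule: finite_induct)
  case empty
  then have C0: "\<And>i. i \<in> I \<Longrightarrow> C i = {}" by auto
  have "(\<Prod>i\<in>I. \<Sum>y\<in>C i \<rightarrow>\<^sub>E A. wt w (C i) y * f i y ^ c)
      = (\<Prod>i\<in>I. f i (\<lambda>x. undefined) ^ c)"
    by (rule prod.cong) (auto simp: C0 wt_def)
  moreover have "(\<Sum>x\<in>{} \<rightarrow>\<^sub>E A. wt w {} x * (\<Prod>i\<in>I. f i (restrict x (C i))))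
      = (\<Prod>i\<in>I. f i (\<lambda>x. undefined))"
    by (auto simp: wt_def C0 intro!: prod.cong)
  ultimately show ?case by (simp add: prod_power_distrib wt_def)
next
  case (insert v V)
  note fin = insert.prems(1) insert.prems(2)
  note w = insert.prems(3)
  define J where "J = {i\<in>I. v \<in> C i}"
  have cJ: "card J = c" using insert.prems(5)[of v] by (simp add: J_def)
  have fJ: "finite J" "J \<subseteq> I" using fin unfolding J_def by auto
  define C' where "C' i = C i - {v}" for i
  define g where "g i z = root c (\<Sum>a\<in>A. w a * f i (z(v:=a)) ^ c)" for i z
  define f' where "f' i = (if i \<in> J then g i else f i)" for i
  have f'nn: "0 \<le> f' i z" for i z
    unfolding f'_def g_def using insert.prems(7) w
    by (auto intro!: real_root_ge_zero sum_nonneg mult_nonneg_nonneg)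
  have C'sub: "i \<in> I \<Longrightarrow> C' i \<subseteq> V" for i using insert.prems(4)[of i] by (auto simp: C'_def)
  have C'card: "u \<in> V \<Longrightarrow> card {i\<in>I. u \<in> C' i} = c" for u
  proof -
    assume u: "u \<in> V"
    then have "u \<noteq> v" using insert.hyps by auto
    then have "{i\<in>I. u \<in> C' i} = {i\<in>I. u \<in> C i}" by (auto simp: C'_def)
    then show ?thesis using insert.prems(5)[of u] u by simp
  qed
  have IH: "(\<Sum>x\<in>V \<rightarrow>\<^sub>E A. wt w V x * (\<Prod>i\<in>I. f' i (restrict x (C' i)))) ^ c
         \<le> (\<Prod>i\<in>I. \<Sum>y\<in>C' i \<rightarrow>\<^sub>E A. wt w (C' i) y * f' i y ^ c)"
    by (rule insert.IH) (use fin w C'sub C'card insert.prems(6) f'nn in auto)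
  have restr: "restrict (y(v:=a)) (C i) = (if i \<in> J then (restrict y (C' i))(v:=a) else restrict y (C' i))"
    if "i \<in> I" for i y a
    using that by (auto simp: J_def C'_def restrict_def fun_eq_iff)
  have pointwise: "wt w (insert v V) (y(v:=a)) * (\<Prod>i\<in>I. f i (restrict (y(v:=a)) (C i)))
      = wt w V y * (\<Prod>i\<in>I-J. f i (restrict y (C' i))) * (w a * (\<Prod>i\<in>J. f i ((restrict y (C' i))(v:=a))))"
    for y a
  proof -
    have "(\<Prod>i\<in>I. f i (restrict (y(v:=a)) (C i)))
        = (\<Prod>i\<in>I. if i \<in> J then f i ((restrict y (C' i))(v:=a)) else f i (restrict y (C' i)))"
      by (rule prod.cong) (auto simp: restr)
    also have "\<dots> = (\<Prod>i\<in>I-J. f i (restrict y (C' i))) * (\<Prod>i\<in>J. f i ((restrict y (C' i))(v:=a)))"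
      using fJ fin by (simp add: prod.If_cases Int_absorb1 Diff_eq)
    finally have P: "(\<Prod>i\<in>I. f i (restrict (y(v:=a)) (C i))) = (\<Prod>i\<in>I-J. f i (restrict y (C' i))) * (\<Prod>i\<in>J. f i ((restrict y (C' i))(v:=a)))" .
    show ?thesis unfolding P wt_insert[OF insert.hyps(1,2)] by (simp add: algebra_simps)
  qed
  define L where "L = (\<Sum>x\<in>insert v V \<rightarrow>\<^sub>E A. wt w (insert v V) x * (\<Prod>i\<in>I. f i (restrict x (C i))))"
  have "L = (\<Sum>a\<in>A. \<Sum>y\<in>V \<rightarrow>\<^sub>E A. wt w V y * (\<Prod>i\<in>I-J. f i (restrict y (C' i))) * (w a * (\<Prod>i\<in>J. f i ((restrict y (C' i))(v:=a)))))"
    unfolding L_def sum_PiE_insert[OF insert.hyps(2)] pointwise ..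
  also have "\<dots> = (\<Sum>y\<in>V \<rightarrow>\<^sub>E A. wt w V y * (\<Prod>i\<in>I-J. f i (restrict y (C' i))) * (\<Sum>a\<in>A. w a * (\<Prod>i\<in>J. f i ((restrict y (C' i))(v:=a)))))"
    by (subst sum.swap) (simp add: sum_distrib_left)
  also have "\<dots> \<le> (\<Sum>y\<in>V \<rightarrow>\<^sub>E A. wt w V y * (\<Prod>i\<in>I-J. f i (restrict y (C' i))) * (\<Prod>i\<in>J. g i (restrict y (C' i))))"
  proof (rule sum_mono)
    fix y assume y: "y \<in> V \<rightarrow>\<^sub>E A"
    have "(\<Sum>a\<in>A. w a * (\<Prod>i\<in>J. f i ((restrict y (C' i))(v:=a)))) \<le> (\<Prod>i\<in>J. g i (restrict y (C' i)))"
      unfolding g_def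
      by (rule holder_gen[where h="\<lambda>i a. f i ((restrict y (C' i))(v:=a))"])
         (use fin fJ cJ insert.prems(6,7) w in auto)
    moreover have "0 \<le> wt w V y * (\<Prod>i\<in>I-J. f i (restrict y (C' i)))"
      using wt_nonneg[OF _ y, of w] w insert.prems(7) by (auto intro!: mult_nonneg_nonneg prod_nonneg)
    ultimately show "wt w V y * (\<Prod>i\<in>I-J. f i (restrict y (C' i))) * (\<Sum>a\<in>A. w a * (\<Prod>i\<in>J. f i ((restrict y (C' i))(v:=a))))
       \<le> wt w V y * (\<Prod>i\<in>I-J. f i (restrict y (C' i))) * (\<Prod>i\<in>J. g i (restrict y (C' i)))"
      by (rule mult_left_mono)
  qed
  also have "\<dots> = (\<Sum>x\<in>V \<rightarrow>\<^sub>E A. wt w V x * (\<Prod>i\<in>I. f' i (restrict x (C' i))))"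
  proof (rule sum.cong[OF refl])
    fix y
    have "(\<Prod>i\<in>I. f' i (restrict y (C' i))) = (\<Prod>i\<in>I-J. f' i (restrict y (C' i))) * (\<Prod>i\<in>J. f' i (restrict y (C' i)))"
      using fJ fin by (metis prod.subset_diff)
    also have "\<dots> = (\<Prod>i\<in>I-J. f i (restrict y (C' i))) * (\<Prod>i\<in>J. g i (restrict y (C' i)))"
      by (auto simp: f'_def intro!: arg_cong2[where f="(*)"] prod.cong)
    finally show "wt w V y * (\<Prod>i\<in>I-J. f i (restrict y (C' i))) * (\<Prod>i\<in>J. g i (restrict y (C' i)))
       = wt w V y * (\<Prod>i\<in>I. f' i (restrict y (C' i)))" by (simp add: algebra_simps)
  qed
  finally have Lle: "L \<le> (\<Sum>x\<in>V \<rightarrow>\<^sub>E A. wt w V x * (\<Prod>i\<in>I. f' i (restrict x (C' i))))" .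
  have L0: "0 \<le> L" unfolding L_def
    using wt_nonneg[of A w] w insert.prems(7) by (auto intro!: sum_nonneg mult_nonneg_nonneg prod_nonneg)
  have "L ^ c \<le> (\<Sum>x\<in>V \<rightarrow>\<^sub>E A. wt w V x * (\<Prod>i\<in>I. f' i (restrict x (C' i)))) ^ c"
    using Lle L0 by (rule power_mono)
  also have "\<dots> \<le> (\<Prod>i\<in>I. \<Sum>y\<in>C' i \<rightarrow>\<^sub>E A. wt w (C' i) y * f' i y ^ c)" by (rule IH)
  also have "\<dots> = (\<Prod>i\<in>I. \<Sum>y\<in>C i \<rightarrow>\<^sub>E A. wt w (C i) y * f i y ^ c)"
  proof (rule prod.cong[OF refl])
    fix i assume i: "i \<in> I"
    show "(\<Sum>y\<in>C' i \<rightarrow>\<^sub>E A. wt w (C' i) y * f' i y ^ c) = (\<Sum>y\<in>C i \<rightarrow>\<^sub>E A. wt w (C i) y * f i y ^ c)"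
    proof (cases "i \<in> J")
      case False
      then have "C' i = C i" using i by (auto simp: J_def C'_def)
      then show ?thesis using False by (simp add: f'_def)
    next
      case True
      then have Ci: "C i = insert v (C' i)" "v \<notin> C' i" by (auto simp: J_def C'_def)
      have fC': "finite (C' i)" using C'sub[OF i] insert.hyps(1) by (rule finite_subset)
      have "(\<Sum>y\<in>C' i \<rightarrow>\<^sub>E A. wt w (C' i) y * f' i y ^ c)
          = (\<Sum>y\<in>C' i \<rightarrow>\<^sub>E A. wt w (C' i) y * (\<Sum>a\<in>A. w a * f i (y(v:=a)) ^ c))"
      proof (rule sum.cong[OF refl])
        fix y
        have "0 \<le> (\<Sum>a\<in>A. w a * f i (y(v:=a)) ^ c)"
          using w insert.prems(7) by (auto intro!: sum_nonneg mult_nonneg_nonneg)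
        then show "wt w (C' i) y * f' i y ^ c = wt w (C' i) y * (\<Sum>a\<in>A. w a * f i (y(v:=a)) ^ c)"
          using True insert.prems(6) by (simp add: f'_def g_def real_root_pow_pos2)
      qed
      also have "\<dots> = (\<Sum>a\<in>A. \<Sum>y\<in>C' i \<rightarrow>\<^sub>E A. wt w (insert v (C' i)) (y(v:=a)) * f i (y(v:=a)) ^ c)"
        by (subst sum.swap) (simp add: wt_insert[OF fC' Ci(2)] sum_distrib_left algebra_simps)
      also have "\<dots> = (\<Sum>y\<in>C i \<rightarrow>\<^sub>E A. wt w (C i) y * f i y ^ c)"
        unfolding Ci(1) sum_PiE_insert[OF Ci(2)] ..
      finally show ?thesis .
    qed
  qed
  finally show ?case unfolding L_def .
qed


lemma homs_sub: "homs V E VF EF \<subseteq> V \<rightarrow>\<^sub>E VF"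
  unfolding homs_def by auto

lemma hom_weight_nonneg:
  assumes "\<And>a. a \<in> VF \<Longrightarrow> 0 \<le> w a"
  shows "0 \<le> hom_weight w V E VF EF"
  unfolding hom_weight_def
  by (rule sum_nonneg, rule prod_nonneg) (use assms in \<open>auto simp: PiE_iff homs_def\<close>)

lemma hom_weight_iso:
  assumes iso: "graph_iso V E V' E'" and E: "E \<subseteq> V \<times> V" and E': "E' \<subseteq> V' \<times> V'"
  shows "hom_weight w V E VF EF = hom_weight w V' E' VF EF"
proof -
  obtain f where bij: "bij_betw f V V'" and fe: "\<forall>x\<in>V. \<forall>y\<in>V. (x, y) \<in> E \<longleftrightarrow> (f x, f y) \<in> E'"
    using iso unfolding graph_iso_def by blast
  define g where "g = inv_into V f"
  have bijg: "bij_betw g V' V" unfolding g_def by (rule bij_betw_inv_into[OF bij])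
  have gf: "x \<in> V \<Longrightarrow> g (f x) = x" for x unfolding g_def using bij by (simp add: bij_betw_def)
  have fg: "y \<in> V' \<Longrightarrow> f (g y) = y" for y unfolding g_def using bij by (simp add: bij_betw_def f_inv_into_f)
  have fV: "x \<in> V \<Longrightarrow> f x \<in> V'" for x using bij by (auto simp: bij_betw_def)
  have gV: "y \<in> V' \<Longrightarrow> g y \<in> V" for y using bijg by (auto simp: bij_betw_def)
  show ?thesis
    unfolding hom_weight_def
  proof (rule sum.reindex_bij_witness[where j="\<lambda>\<phi>. restrict (\<phi> \<circ> g) V'" and i="\<lambda>\<psi>. restrict (\<psi> \<circ> f) V"])
    fix \<phi> assume a: "\<phi> \<in> homs V E VF EF"
    then show "restrict (restrict (\<phi> \<circ> g) V' \<circ> f) V = \<phi>"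
      by (auto simp: homs_def fun_eq_iff fV gf PiE_iff extensional_def)
    show "restrict (\<phi> \<circ> g) V' \<in> homs V' E' VF EF"
    proof -
      have "(\<phi> (g x), \<phi> (g y)) \<in> EF" if "(x, y) \<in> E'" for x y
      proof -
        have xy: "x \<in> V'" "y \<in> V'" using that E' by auto
        then have "(g x, g y) \<in> E" using fe gV fg that by metis
        then show ?thesis using a unfolding homs_def by auto
      qed
      moreover have "\<phi> (g x) \<in> VF" if "x \<in> V'" for x using a gV[OF that] by (auto simp: homs_def)
      ultimately show ?thesis using E' unfolding homs_def by auto
    qed
    show "(\<Prod>x\<in>V'. w (restrict (\<phi> \<circ> g) V' x)) = (\<Prod>x\<in>V. w (\<phi> x))"
    proof -
      have "(\<Prod>x\<in>V'. w (restrict (\<phi> \<circ> g) V' x)) = (\<Prod>x\<in>V'. w (\<phi> (g x)))" by (rule prod.cong) auto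
      also have "\<dots> = (\<Prod>x\<in>V. w (\<phi> x))" by (rule prod.reindex_bij_betw[OF bijg])
      finally show ?thesis .
    qed
  next
    fix \<psi> assume a: "\<psi> \<in> homs V' E' VF EF"
    then show "restrict (restrict (\<psi> \<circ> f) V \<circ> g) V' = \<psi>"
      by (auto simp: homs_def fun_eq_iff gV fg PiE_iff extensional_def)
    have "(\<psi> (f x), \<psi> (f y)) \<in> EF" if "(x, y) \<in> E" for x y
    proof -
      have "x \<in> V" "y \<in> V" using that E by auto
      then have "(f x, f y) \<in> E'" using fe that by blast
      then show ?thesis using a unfolding homs_def by auto
    qed
    moreover have "\<psi> (f x) \<in> VF" if "x \<in> V" for x using a fV[OF that] by (auto simp: homs_def)
    ultimately show "restrict (\<psi> \<circ> f) V \<in> homs V E VF EF" using E unfolding homs_def by auto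
  qed
qed

lemma hom_restrict:
  assumes "\<phi> \<in> homs VG EG VF EF" "is_copy VH EH VG EG C"
  shows "restrict \<phi> (fst C) \<in> homs (fst C) (snd C) VF EF"
  using assms unfolding homs_def is_copy_def by (fastforce simp: PiE_iff subset_iff)

lemma hom_tile:
  assumes "finite VG" "finite VF" "\<And>a. a \<in> VF \<Longrightarrow> 0 \<le> w a"
    and cs: "\<forall>C\<in>set cs. is_copy VH EH VG EG C" and c: "c > 0"
    and cov: "\<forall>v\<in>VG. length (filter (\<lambda>C. v \<in> fst C) cs) = c"
  shows "hom_weight w VG EG VF EF ^ c
     \<le> (\<Prod>i\<in>{..<length cs}. hom_weight w (fst (cs!i)) (snd (cs!i)) VF EF)"
proof -
  define m where "m = length cs"
  define Ci where "Ci i = fst (cs!i)" for i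
  define Hi where "Hi i = homs (fst (cs!i)) (snd (cs!i)) VF EF" for i
  define f where "f i y = (if y \<in> Hi i then 1 else (0::real))" for i y
  have copy: "i < m \<Longrightarrow> is_copy VH EH VG EG (cs!i)" for i using cs by (simp add: m_def)
  have Csub: "i \<in> {..<m} \<Longrightarrow> Ci i \<subseteq> VG" for i using copy[of i] by (auto simp: Ci_def is_copy_def)
  have card: "v \<in> VG \<Longrightarrow> card {i\<in>{..<m}. v \<in> Ci i} = c" for v
  proof -
    assume v: "v \<in> VG"
    have "{i\<in>{..<m}. v \<in> Ci i} = {i. i < length cs \<and> v \<in> fst (cs!i)}" by (auto simp: m_def Ci_def)
    then show ?thesis using cov v by (simp add: length_filter_conv_card)
  qed
  have F: "(\<Sum>x\<in>VG \<rightarrow>\<^sub>E VF. wt w VG x * (\<Prod>i\<in>{..<m}. f i (restrict x (Ci i)))) ^ c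
         \<le> (\<Prod>i\<in>{..<m}. \<Sum>y\<in>Ci i \<rightarrow>\<^sub>E VF. wt w (Ci i) y * f i y ^ c)"
    by (rule finner) (use assms Csub card in \<open>auto simp: f_def\<close>)
  have L: "hom_weight w VG EG VF EF \<le> (\<Sum>x\<in>VG \<rightarrow>\<^sub>E VF. wt w VG x * (\<Prod>i\<in>{..<m}. f i (restrict x (Ci i))))"
  proof -
    have "hom_weight w VG EG VF EF = (\<Sum>x\<in>homs VG EG VF EF. wt w VG x * (\<Prod>i\<in>{..<m}. f i (restrict x (Ci i))))"
      unfolding hom_weight_def
    proof (rule sum.cong[OF refl])
      fix x assume x: "x \<in> homs VG EG VF EF"
      have "(\<Prod>i\<in>{..<m}. f i (restrict x (Ci i))) = 1"
        using hom_restrict[OF x copy] by (auto simp: f_def Hi_def Ci_def intro!: prod.neutral)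
      then show "(\<Prod>v\<in>VG. w (x v)) = wt w VG x * (\<Prod>i\<in>{..<m}. f i (restrict x (Ci i)))"
        by (simp add: wt_def)
    qed
    also have "\<dots> \<le> (\<Sum>x\<in>VG \<rightarrow>\<^sub>E VF. wt w VG x * (\<Prod>i\<in>{..<m}. f i (restrict x (Ci i))))"
    proof (rule sum_mono2)
      show "finite (VG \<rightarrow>\<^sub>E VF)" using assms by (simp add: finite_PiE)
      show "homs VG EG VF EF \<subseteq> VG \<rightarrow>\<^sub>E VF" by (rule homs_sub)
      fix x assume "x \<in> (VG \<rightarrow>\<^sub>E VF) - homs VG EG VF EF"
      then have "x \<in> VG \<rightarrow>\<^sub>E VF" by simp
      then have "0 \<le> wt w VG x" using assms(3) by (rule wt_nonneg[rotated])
      moreover have "0 \<le> (\<Prod>i\<in>{..<m}. f i (restrict x (Ci i)))" by (rule prod_nonneg) (simp add: f_def)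
      ultimately show "0 \<le> wt w VG x * (\<Prod>i\<in>{..<m}. f i (restrict x (Ci i)))" by simp
    qed
    finally show ?thesis .
  qed
  have R: "(\<Sum>y\<in>Ci i \<rightarrow>\<^sub>E VF. wt w (Ci i) y * f i y ^ c) = hom_weight w (fst (cs!i)) (snd (cs!i)) VF EF"
    if "i \<in> {..<m}" for i
  proof -
    have fin: "finite (Ci i \<rightarrow>\<^sub>E VF)" using Csub[OF that] assms(1,2) by (auto intro: finite_PiE finite_subset)
    have "(\<Sum>y\<in>Ci i \<rightarrow>\<^sub>E VF. wt w (Ci i) y * f i y ^ c) = (\<Sum>y\<in>Ci i \<rightarrow>\<^sub>E VF. if y \<in> Hi i then wt w (Ci i) y else 0)"
      using c by (intro sum.cong) (auto simp: f_def)
    also have "\<dots> = (\<Sum>y\<in>(Ci i \<rightarrow>\<^sub>E VF) \<inter> Hi i. wt w (Ci i) y)"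
      by (rule sum.inter_restrict[OF fin, symmetric])
    also have "(Ci i \<rightarrow>\<^sub>E VF) \<inter> Hi i = Hi i" unfolding Hi_def Ci_def using homs_sub by blast
    finally show ?thesis by (simp add: hom_weight_def Hi_def Ci_def wt_def)
  qed
  have "hom_weight w VG EG VF EF ^ c \<le> (\<Sum>x\<in>VG \<rightarrow>\<^sub>E VF. wt w VG x * (\<Prod>i\<in>{..<m}. f i (restrict x (Ci i)))) ^ c"
    by (rule power_mono[OF L hom_weight_nonneg]) (use assms in auto)
  also note F
  also have "(\<Prod>i\<in>{..<m}. \<Sum>y\<in>Ci i \<rightarrow>\<^sub>E VF. wt w (Ci i) y * f i y ^ c)
      = (\<Prod>i\<in>{..<length cs}. hom_weight w (fst (cs!i)) (snd (cs!i)) VF EF)"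
    using R by (auto simp: m_def intro!: prod.cong)
  finally show ?thesis .
qed

lemma final_ineq:
  fixes a b :: real and c m nG nH :: nat
  assumes "0 \<le> a" "0 \<le> b" "a ^ c \<le> b ^ m" "m * nH = c * nG" "c > 0" "nG > 0" "nH > 0"
  shows "a powr (1 / nG) \<le> b powr (1 / nH)"
proof (cases "a = 0")
  case True then show ?thesis by simp
next
  case False
  then have a: "a > 0" using assms by simp
  have m: "m > 0" using assms by (metis gr0I mult_is_0 nat_neq_iff)
  have b: "b > 0"
  proof (rule ccontr)
    assume "\<not> b > 0" then have "b = 0" using assms by simp
    then have "a ^ c \<le> 0" using assms m by (simp add: power_0_left)
    moreover have "a ^ c > 0" using a by simp
    ultimately show False by simp
  qed
  have "ln (a ^ c) \<le> ln (b ^ m)" using assms a b by (subst ln_le_cancel_iff) auto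
  then have lc: "c * ln a \<le> m * ln b" using a b by (simp add: ln_realpow)
  have eq: "real m * real nH = real c * real nG" using assms(4) by (metis of_nat_mult)
  have "real c * (ln a * nH) = nH * (c * ln a)" by simp
  also have "\<dots> \<le> nH * (m * ln b)" using lc by (intro mult_left_mono) auto
  also have "\<dots> = (real m * real nH) * ln b" by simp
  also have "\<dots> = real c * (ln b * nG)" using eq by simp
  finally have "ln a * nH \<le> ln b * nG" using assms(5) by simp
  then have "ln a / nG \<le> ln b / nH" using assms(6,7) by (simp add: divide_le_eq le_divide_eq field_simps)
  then have "exp (1 / nG * ln a) \<le> exp (1 / nH * ln b)" by simp
  then show ?thesis using a b by (simp add: powr_def)
qed


lemma count_01: "finite A \<Longrightarrow> B \<subseteq> A \<Longrightarrow> card B = (\<Sum>x\<in>A. if x \<in> B then 1 else (0::nat))"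
proof -
  assume a: "finite A" "B \<subseteq> A"
  have "(\<Sum>x\<in>A. if x \<in> B then 1 else (0::nat)) = (\<Sum>x\<in>A \<inter> B. 1)"
    by (rule sum.inter_restrict[OF a(1), symmetric])
  also have "A \<inter> B = B" using a by auto
  finally show ?thesis by simp
qed

lemma main_gen:
  assumes G: "graph VG EG" and H: "graph VH EH" and "VG \<noteq> {}" "VH \<noteq> {}"
    and ft: "fractionally_tiles VH EH VG EG" and VF: "finite VF" and w: "\<forall>a\<in>VF. 0 \<le> w a"
  shows "hom_weight w VG EG VF EF powr (1 / real (card VG))
           \<le> hom_weight w VH EH VF EF powr (1 / real (card VH))"
proof -
  obtain cs c where cs: "\<forall>C\<in>set cs. is_copy VH EH VG EG C" and c: "c > (0::nat)"
    and cov: "\<forall>v\<in>VG. length (filter (\<lambda>C. v \<in> fst C) cs) = c"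
    using ft unfolding fractionally_tiles_def by blast
  define m where "m = length cs"
  have finG: "finite VG" and finH: "finite VH" and EH: "EH \<subseteq> VH \<times> VH"
    using G H by (auto simp: graph_def)
  have copy: "i < m \<Longrightarrow> is_copy VH EH VG EG (cs!i)" for i using cs by (simp add: m_def)
  have hw: "i \<in> {..<m} \<Longrightarrow> hom_weight w (fst (cs!i)) (snd (cs!i)) VF EF = hom_weight w VH EH VF EF" for i
    using copy[of i] EH by (intro hom_weight_iso) (auto simp: is_copy_def)
  have cardC: "i \<in> {..<m} \<Longrightarrow> card (fst (cs!i)) = card VH" for i
    using copy[of i] by (auto simp: is_copy_def graph_iso_def intro: bij_betw_same_card)
  have T: "hom_weight w VG EG VF EF ^ c \<le> hom_weight w VH EH VF EF ^ m"
  proof -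
    have "hom_weight w VG EG VF EF ^ c
       \<le> (\<Prod>i\<in>{..<length cs}. hom_weight w (fst (cs!i)) (snd (cs!i)) VF EF)"
      by (rule hom_tile[OF finG VF _ cs c cov]) (use w in auto)
    also have "\<dots> = (\<Prod>i\<in>{..<m}. hom_weight w VH EH VF EF)"
      using hw by (auto simp: m_def intro!: prod.cong)
    finally show ?thesis by simp
  qed
  have dc: "m * card VH = c * card VG"
  proof -
    have "m * card VH = (\<Sum>i\<in>{..<m}. card (fst (cs!i)))" using cardC by simp
    also have "\<dots> = (\<Sum>i\<in>{..<m}. \<Sum>v\<in>VG. if v \<in> fst (cs!i) then 1 else 0)"
      using copy finG by (intro sum.cong refl count_01) (auto simp: is_copy_def)
    also have "\<dots> = (\<Sum>v\<in>VG. \<Sum>i\<in>{..<m}. if v \<in> fst (cs!i) then 1 else 0)"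
      by (rule sum.swap)
    also have "\<dots> = (\<Sum>v\<in>VG. c)"
    proof (rule sum.cong[OF refl])
      fix v assume v: "v \<in> VG"
      have "(\<Sum>i\<in>{..<m}. if v \<in> fst (cs!i) then 1 else 0) = card {i\<in>{..<m}. v \<in> fst (cs!i)}"
      proof -
        have "(\<Sum>i\<in>{..<m}. if v \<in> fst (cs!i) then 1 else (0::nat))
            = (\<Sum>i\<in>{..<m}. if i \<in> {i\<in>{..<m}. v \<in> fst (cs!i)} then 1 else 0)"
          by (rule sum.cong) auto
        also have "\<dots> = card {i\<in>{..<m}. v \<in> fst (cs!i)}" by (rule count_01[symmetric]) auto
        finally show ?thesis .
      qed
      also have "{i\<in>{..<m}. v \<in> fst (cs!i)} = {i. i < length cs \<and> v \<in> fst (cs!i)}" by (auto simp: m_def)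
      finally show "(\<Sum>i\<in>{..<m}. if v \<in> fst (cs!i) then 1 else 0) = c"
        using cov v by (simp add: length_filter_conv_card)
    qed
    finally show ?thesis by simp
  qed
  show ?thesis
    by (rule final_ineq[OF _ _ T dc c])
       (use w finG finH assms(3,4) in \<open>auto intro!: hom_weight_nonneg simp: card_gt_0_iff\<close>)
qed

lemma indep_homs:
  assumes "E \<subseteq> V \<times> V"
  shows "real (card (indep_sets V E)) = hom_weight (\<lambda>_. 1) V E (UNIV :: bool set) {(x, y). \<not> (x \<and> y)}"
proof -
  have "bij_betw (\<lambda>S. restrict (\<lambda>x. x \<in> S) V) (indep_sets V E) (homs V E UNIV {(x, y). \<not> (x \<and> y)})"
  proof (rule bij_betw_byWitness[where f'="\<lambda>\<phi>. {x\<in>V. \<phi> x}"])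
    show "\<forall>S\<in>indep_sets V E. {x \<in> V. restrict (\<lambda>x. x \<in> S) V x} = S"
      by (auto simp: indep_sets_def)
    show "\<forall>\<phi>\<in>homs V E UNIV {(x, y). \<not> (x \<and> y)}. restrict (\<lambda>x. x \<in> {x \<in> V. \<phi> x}) V = \<phi>"
      by (auto simp: homs_def fun_eq_iff PiE_iff extensional_def)
    show "(\<lambda>S. restrict (\<lambda>x. x \<in> S) V) ` indep_sets V E \<subseteq> homs V E UNIV {(x, y). \<not> (x \<and> y)}"
      using assms by (fastforce simp: indep_sets_def homs_def)
    show "(\<lambda>\<phi>. {x \<in> V. \<phi> x}) ` homs V E UNIV {(x, y). \<not> (x \<and> y)} \<subseteq> indep_sets V E"
      by (fastforce simp: indep_sets_def homs_def)
  qed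
  then have "card (indep_sets V E) = card (homs V E (UNIV :: bool set) {(x, y). \<not> (x \<and> y)})"
    by (rule bij_betw_same_card)
  then show ?thesis by (simp add: hom_weight_def)
qed

lemma col_homs:
  "real (card (proper_colorings q V E)) = hom_weight (\<lambda>_. 1) V E {..<q} {(x, y). x \<noteq> y}"
proof -
  have "proper_colorings q V E = homs V E {..<q} {(x, y). x \<noteq> y}"
    by (auto simp: proper_colorings_def homs_def)
  then show ?thesis by (simp add: hom_weight_def)
qed

theorem proposition5p2:
  fixes VG :: "'a set" and EG :: "('a \<times> 'a) set"
    and VH :: "'b set" and EH :: "('b \<times> 'b) set"
    and q :: nat
    and VF :: "'c set" and EF :: "('c \<times> 'c) set" and w :: "'c \<Rightarrow> real"
  assumes "graph VG EG" and "graph VH EH"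
    and "VG \<noteq> {}" and "VH \<noteq> {}"
    and "fractionally_tiles VH EH VG EG"
    and "finite VF" and "EF \<subseteq> VF \<times> VF" and "sym EF"
    and "\<forall>v\<in>VF. 0 < w v"
  shows "real (card (indep_sets VG EG)) powr (1 / real (card VG))
           \<le> real (card (indep_sets VH EH)) powr (1 / real (card VH)) \<and>
         real (card (proper_colorings q VG EG)) powr (1 / real (card VG))
           \<le> real (card (proper_colorings q VH EH)) powr (1 / real (card VH)) \<and>
         hom_weight w VG EG VF EF powr (1 / real (card VG))
           \<le> hom_weight w VH EH VF EF powr (1 / real (card VH))"
proof (intro conjI)
  have EG: "EG \<subseteq> VG \<times> VG" and EH: "EH \<subseteq> VH \<times> VH" using assms(1,2) by (auto simp: graph_def)
  show "real (card (indep_sets VG EG)) powr (1 / real (card VG))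
           \<le> real (card (indep_sets VH EH)) powr (1 / real (card VH))"
    unfolding indep_homs[OF EG] indep_homs[OF EH]
    by (rule main_gen[OF assms(1-5)]) auto
  show "real (card (proper_colorings q VG EG)) powr (1 / real (card VG))
           \<le> real (card (proper_colorings q VH EH)) powr (1 / real (card VH))"
    unfolding col_homs
    by (rule main_gen[OF assms(1-5)]) auto
  show "hom_weight w VG EG VF EF powr (1 / real (card VG))
           \<le> hom_weight w VH EH VF EF powr (1 / real (card VH))"
    by (rule main_gen[OF assms(1-6)]) (use assms(9) in \<open>auto simp: less_imp_le\<close>)
qed

end
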